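(* Let $X$ be a connected weighted graph. Then the subdivision $S(X)$ is nonsingular (i.e. $A(S(X))$ is invertible) if and only if $X$ is unicyclic and its unique cycle $C_p$, with the weights it inherits from $X$, has nonsingular subdivision $S(C_p)$.
   Context: Graphs are simple, undirected, with nonzero real edge weights; $A(\cdot)$ is the weighted adjacency matrix. The subdivision $S(X)$ of a weighted graph $X$ is obtained by replacing each edge $\{u,v\}$ of weight $\omega$ by a new vertex $w$ and two edges $\{u,w\},\{w,v\}$, each of weight $\omega$. *)

theory Defs
  imports Complex_Main "HOL-Combinatorics.Permutations"
begin

text \<open>A weighted simple graph is given by a finite vertex set V and a symmetric weight
function w with zero diagonal; {u,v} (u,v in V) is an edge iff w u v is nonzero.
The weighted adjacency matrix A is (u,v) \<mapsto> w u v, restricted to V.\<close>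

definition wgraph :: "'a set \<Rightarrow> ('a \<Rightarrow> 'a \<Rightarrow> real) \<Rightarrow> bool" where
  "wgraph V w \<longleftrightarrow> finite V \<and> (\<forall>u\<in>V. \<forall>v\<in>V. w u v = w v u) \<and> (\<forall>v\<in>V. w v v = 0)"

definition edges :: "'a set \<Rightarrow> ('a \<Rightarrow> 'a \<Rightarrow> real) \<Rightarrow> 'a set set" where
  "edges V w = {{u, v} | u v. u \<in> V \<and> v \<in> V \<and> w u v \<noteq> 0}"

definition connected_wg :: "'a set \<Rightarrow> ('a \<Rightarrow> 'a \<Rightarrow> real) \<Rightarrow> bool" where
  "connected_wg V w \<longleftrightarrow> V \<noteq> {} \<and>
     (\<forall>u\<in>V. \<forall>v\<in>V. (u, v) \<in> {(x, y). x \<in> V \<and> y \<in> V \<and> w x y \<noteq> 0}\<^sup>*)"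

definition adj_det :: "'a set \<Rightarrow> ('a \<Rightarrow> 'a \<Rightarrow> real) \<Rightarrow> real" where
  "adj_det V w = (\<Sum>p \<in> {p. p permutes V}. of_int (sign p) * (\<Prod>v\<in>V. w v (p v)))"

definition nonsingular :: "'a set \<Rightarrow> ('a \<Rightarrow> 'a \<Rightarrow> real) \<Rightarrow> bool" where
  "nonsingular V w \<longleftrightarrow> adj_det V w \<noteq> 0"

text \<open>Subdivision: vertices are the old vertices (Inl) and the edges (Inr); the new vertex
for edge e = {u,v} is joined to u and to v, each with weight w u v.\<close>
definition subdiv_verts :: "'a set \<Rightarrow> ('a \<Rightarrow> 'a \<Rightarrow> real) \<Rightarrow> ('a + 'a set) set" where
  "subdiv_verts V w = Inl ` V \<union> Inr ` edges V w"

fun subdiv_wt :: "'a set \<Rightarrow> ('a \<Rightarrow> 'a \<Rightarrow> real) \<Rightarrow> ('a + 'a set) \<Rightarrow> ('a + 'a set) \<Rightarrow> real" where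
  "subdiv_wt V w (Inl u) (Inr e) =
     (if e \<in> edges V w \<and> u \<in> e then (\<Sum>v\<in>e - {u}. w u v) else 0)"
| "subdiv_wt V w (Inr e) (Inl u) =
     (if e \<in> edges V w \<and> u \<in> e then (\<Sum>v\<in>e - {u}. w u v) else 0)"
| "subdiv_wt V w _ _ = 0"

definition subdiv_nonsingular :: "'a set \<Rightarrow> ('a \<Rightarrow> 'a \<Rightarrow> real) \<Rightarrow> bool" where
  "subdiv_nonsingular V w \<longleftrightarrow> nonsingular (subdiv_verts V w) (subdiv_wt V w)"

definition is_cycle :: "'a set \<Rightarrow> ('a \<Rightarrow> 'a \<Rightarrow> real) \<Rightarrow> 'a set set \<Rightarrow> bool" where
  "is_cycle V w C \<longleftrightarrow> (\<exists>vs. length vs \<ge> 3 \<and> distinct vs \<and> set vs \<subseteq> V \<and>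
      (\<forall>i < length vs. w (vs ! i) (vs ! ((i + 1) mod length vs)) \<noteq> 0) \<and>
      C = {{vs ! i, vs ! ((i + 1) mod length vs)} | i. i < length vs})"

definition unicyclic :: "'a set \<Rightarrow> ('a \<Rightarrow> 'a \<Rightarrow> real) \<Rightarrow> bool" where
  "unicyclic V w \<longleftrightarrow> connected_wg V w \<and> (\<exists>!C. is_cycle V w C)"

definition cycle_wt :: "('a \<Rightarrow> 'a \<Rightarrow> real) \<Rightarrow> 'a set set \<Rightarrow> 'a \<Rightarrow> 'a \<Rightarrow> real" where
  "cycle_wt w C u v = (if {u, v} \<in> C then w u v else 0)"

end

theory Submission
  imports Defs
begin

lemma adj_det_cong:
  assumes "\<And>x y. x \<in> S \<Longrightarrow> y \<in> S \<Longrightarrow> f x y = g x y"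
  shows "adj_det S f = adj_det S g"
  unfolding adj_det_def
proof (rule sum.cong[OF refl])
  fix p assume "p \<in> {p. p permutes S}"
  then have p: "p permutes S" by simp
  show "of_int (sign p) * (\<Prod>v\<in>S. f v (p v)) = of_int (sign p) * (\<Prod>v\<in>S. g v (p v))"
    using assms permutes_in_image[OF p] by (metis (no_types, lifting) prod.cong)
qed

lemma det_pendant:
  assumes fin: "finite S" and aS: "a \<in> S" and bS: "b \<in> S" and ab: "a \<noteq> b"
    and col: "\<And>x. x \<in> S \<Longrightarrow> f x a \<noteq> 0 \<Longrightarrow> x = b"
    and row: "\<And>y. y \<in> S \<Longrightarrow> f a y \<noteq> 0 \<Longrightarrow> y = b"
  shows "adj_det S f = - (f a b * f b a) * adj_det (S - {a, b}) f"
proof -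
  define S' where "S' = S - {a, b}"
  define P where "P = {p. p permutes S}"
  define Q where "Q = {q. q permutes S'}"
  define T where "T = {p \<in> P. p a = b \<and> p b = a}"
  define g where "g p = of_int (sign p) * (\<Prod>v\<in>S. f v (p v))" for p
  have finP: "finite P" unfolding P_def using fin by (simp add: finite_permutations)
  have S_eq: "S = insert a (insert b S')" unfolding S'_def using aS bS by auto
  have finS': "finite S'" unfolding S'_def using fin by simp
  have aS': "a \<notin> S'" "b \<notin> S'" unfolding S'_def by auto
  have step1: "sum g P = sum g T"
  proof (rule sum.mono_neutral_right[OF finP])
    show "T \<subseteq> P" unfolding T_def by auto
    show "\<forall>p\<in>P - T. g p = 0"
    proof
      fix p assume pPT: "p \<in> P - T"
      then have p: "p permutes S" unfolding P_def by simp
      have "(\<Prod>v\<in>S. f v (p v)) = 0"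
      proof (cases "p a = b")
        case False
        have "f a (p a) = 0" using row[of "p a"] False permutes_in_image[OF p] aS by auto
        then show ?thesis using fin aS by (meson prod_zero)
      next
        case True
        with pPT have pb: "p b \<noteq> a" unfolding T_def by auto
        obtain x where x: "p x = a" using permutes_surj[OF p] by (metis surjD)
        have xS: "x \<in> S" using x aS permutes_in_image[OF p] by metis
        have "x \<noteq> b" using x pb by auto
        then have "f x (p x) = 0" using col[OF xS] x by auto
        then show ?thesis using fin xS by (meson prod_zero)
      qed
      then show "g p = 0" unfolding g_def by simp
    qed
  qed
  define h where "h q = transpose a b \<circ> q" for q :: "'a \<Rightarrow> 'a"
  have inj: "inj_on h Q"
    unfolding h_def inj_on_def by (metis comp_assoc transpose_comp_involutory comp_id id_comp)
  have img: "h ` Q = T"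
  proof
    show "h ` Q \<subseteq> T"
    proof
      fix p assume "p \<in> h ` Q"
      then obtain q where q: "q permutes S'" and pq: "p = h q" unfolding Q_def by auto
      have qS: "q permutes S" using permutes_subset[OF q] unfolding S'_def by auto
      have "p permutes S" unfolding pq h_def
        by (rule permutes_compose[OF qS permutes_swap_id[OF aS bS]])
      moreover have "q a = a" "q b = b" using permutes_not_in[OF q] aS' by auto
      ultimately show "p \<in> T" unfolding T_def P_def pq h_def by simp
    qed
  next
    show "T \<subseteq> h ` Q"
    proof
      fix p assume "p \<in> T"
      then have p: "p permutes S" and pa: "p a = b" and pb: "p b = a" unfolding T_def P_def by auto
      define q where "q = transpose a b \<circ> p"
      have "q permutes S" unfolding q_def
        by (rule permutes_compose[OF p permutes_swap_id[OF aS bS]])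
      then have "q permutes S'"
        by (rule permutes_superset) (auto simp: q_def S'_def pa pb)
      moreover have "p = h q" unfolding h_def q_def
        by (metis comp_assoc transpose_comp_involutory id_comp)
      ultimately show "p \<in> h ` Q" unfolding Q_def by auto
    qed
  qed
  have step2: "sum g T = sum (g \<circ> h) Q"
    using sum.reindex[OF inj, of g] img by simp
  have step3: "(g \<circ> h) q = - (f a b * f b a) * (of_int (sign q) * (\<Prod>v\<in>S'. f v (q v)))"
    if "q \<in> Q" for q
  proof -
    have q: "q permutes S'" using that unfolding Q_def by simp
    have qa: "q a = a" "q b = b" using permutes_not_in[OF q] aS' by auto
    have sg: "sign (h q) = - sign q"
      unfolding h_def
      by (simp add: sign_compose permutation_swap_id permutes_imp_permutation[OF finS' q] sign_swap_id ab)
    have pr: "(\<Prod>v\<in>S'. f v (h q v)) = (\<Prod>v\<in>S'. f v (q v))"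
    proof (rule prod.cong[OF refl])
      fix v assume "v \<in> S'"
      then have "q v \<in> S'" using permutes_in_image[OF q] by simp
      then have "q v \<noteq> a" "q v \<noteq> b" using aS' by auto
      then show "f v (h q v) = f v (q v)" unfolding h_def by simp
    qed
    have "(\<Prod>v\<in>S. f v (h q v)) = f a b * (f b a * (\<Prod>v\<in>S'. f v (q v)))"
      unfolding S_eq using aS' ab finS' pr qa by (simp add: h_def)
    then show ?thesis unfolding g_def comp_def sg by simp
  qed
  have "adj_det S f = sum g P" unfolding adj_det_def g_def P_def by simp
  also have "\<dots> = sum (g \<circ> h) Q" using step1 step2 by simp
  also have "\<dots> = (\<Sum>q\<in>Q. - (f a b * f b a) * (of_int (sign q) * (\<Prod>v\<in>S'. f v (q v))))"
    using step3 by (rule sum.cong[OF refl])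
  also have "\<dots> = - (f a b * f b a) * adj_det S' f"
    unfolding adj_det_def Q_def by (simp add: sum_distrib_left)
  finally show ?thesis unfolding S'_def .
qed

lemma edges_fin: assumes "finite V" shows "finite (edges V w)"
proof -
  have "edges V w \<subseteq> (\<lambda>(u,v). {u,v}) ` (V \<times> V)" unfolding edges_def by auto
  then show ?thesis using assms by (meson finite_SigmaI finite_imageI finite_subset)
qed

lemma edge_mem: "x \<in> V \<Longrightarrow> y \<in> V \<Longrightarrow> w x y \<noteq> 0 \<Longrightarrow> {x, y} \<in> edges V w"
  unfolding edges_def by auto

lemma edge_at:
  assumes "wgraph V w" "e \<in> edges V w" "x \<in> e"
  shows "x \<in> V \<and> (\<exists>y\<in>V. e = {x, y} \<and> w x y \<noteq> 0 \<and> y \<noteq> x)"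
proof -
  obtain a b where e: "e = {a, b}" "a \<in> V" "b \<in> V" "w a b \<noteq> 0"
    using assms(2) unfolding edges_def by auto
  have ab: "a \<noteq> b" using e assms(1) unfolding wgraph_def by auto
  have sym: "w b a \<noteq> 0" using e assms(1) unfolding wgraph_def by auto
  show ?thesis
  proof (cases "x = a")
    case True then show ?thesis using e ab by auto
  next
    case False
    then have "x = b" using assms(3) e by auto
    then show ?thesis using e ab sym by (auto simp: insert_commute)
  qed
qed

lemma edge_card2:
  assumes "wgraph V w" "e \<in> edges V w" shows "card e = 2"
proof -
  obtain a b where e: "e = {a, b}" "a \<in> V" "b \<in> V" "w a b \<noteq> 0"
    using assms(2) unfolding edges_def by auto
  have ab: "a \<noteq> b" using e assms(1) unfolding wgraph_def by auto
  then show ?thesis using e by simp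
qed

lemma edges_sub: "e \<in> edges V w \<Longrightarrow> e \<subseteq> V"
  unfolding edges_def by auto

lemma sw_nz:
  assumes "subdiv_wt V w x y \<noteq> 0"
  shows "(\<exists>u e. x = Inl u \<and> y = Inr e \<and> e \<in> edges V w \<and> u \<in> e) \<or>
         (\<exists>u e. x = Inr e \<and> y = Inl u \<and> e \<in> edges V w \<and> u \<in> e)"
  using assms by (cases x; cases y) (auto split: if_splits)

lemma subdiv_fin: "finite V \<Longrightarrow> finite (subdiv_verts V w)"
  unfolding subdiv_verts_def using edges_fin by auto

lemma det_zero_card:
  assumes g: "wgraph V w" and ne: "card (edges V w) \<noteq> card V"
  shows "adj_det (subdiv_verts V w) (subdiv_wt V w) = 0"
  unfolding adj_det_def
proof (rule sum.neutral, rule ballI)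
  let ?S = "subdiv_verts V w"
  let ?E = "edges V w"
  have finV: "finite V" using g unfolding wgraph_def by simp
  have finS: "finite ?S" using subdiv_fin[OF finV] .
  fix p assume "p \<in> {p. p permutes ?S}"
  then have p: "p permutes ?S" by simp
  have "(\<Prod>v\<in>?S. subdiv_wt V w v (p v)) = 0"
  proof (rule ccontr)
    assume "(\<Prod>v\<in>?S. subdiv_wt V w v (p v)) \<noteq> 0"
    then have nz: "\<And>x. x \<in> ?S \<Longrightarrow> subdiv_wt V w x (p x) \<noteq> 0"
      using finS by auto
    have injp: "inj_on p X" for X using permutes_inj[OF p] by (simp add: inj_on_def inj_def)
    have 1: "p ` (Inl ` V) \<subseteq> Inr ` ?E"
    proof
      fix z assume "z \<in> p ` (Inl ` V)"
      then obtain x where x: "x \<in> V" "z = p (Inl x)" by auto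
      have "Inl x \<in> ?S" using x unfolding subdiv_verts_def by auto
      from sw_nz[OF nz[OF this]] show "z \<in> Inr ` ?E" using x by auto
    qed
    have 2: "p ` (Inr ` ?E) \<subseteq> Inl ` V"
    proof
      fix z assume "z \<in> p ` (Inr ` ?E)"
      then obtain e where x: "e \<in> ?E" "z = p (Inr e)" by auto
      have "Inr e \<in> ?S" using x unfolding subdiv_verts_def by auto
      from sw_nz[OF nz[OF this]] show "z \<in> Inl ` V" using x edges_sub by fastforce
    qed
    have "card (Inl ` V :: ('a + 'a set) set) \<le> card (Inr ` ?E :: ('a + 'a set) set)"
      by (rule card_inj_on_le[OF injp 1]) (simp add: edges_fin[OF finV])
    moreover have "card (Inr ` ?E :: ('a + 'a set) set) \<le> card (Inl ` V :: ('a + 'a set) set)"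
      by (rule card_inj_on_le[OF injp 2]) (simp add: finV)
    ultimately show False using ne by (simp add: card_image)
  qed
  then show "of_int (sign p) * (\<Prod>v\<in>?S. subdiv_wt V w v (p v)) = 0" by simp
qed

lemma leaf_edges:
  assumes g: "wgraph V w" and u: "u \<in> V" and leaf: "{e \<in> edges V w. u \<in> e} = {{u, v}}"
  shows "edges (V - {u}) w = edges V w - {{u, v}}"
proof
  show "edges (V - {u}) w \<subseteq> edges V w - {{u, v}}"
  proof
    fix e assume "e \<in> edges (V - {u}) w"
    then obtain x y where e: "e = {x, y}" "x \<in> V - {u}" "y \<in> V - {u}" "w x y \<noteq> 0"
      unfolding edges_def by blast
    then have "e \<in> edges V w" using edge_mem[of x V y w] by blast
    moreover have "e \<noteq> {u, v}" using e by blast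
    ultimately show "e \<in> edges V w - {{u, v}}" by blast
  qed
next
  show "edges V w - {{u, v}} \<subseteq> edges (V - {u}) w"
  proof
    fix e assume e: "e \<in> edges V w - {{u, v}}"
    have "u \<notin> e"
    proof
      assume "u \<in> e"
      then have "e \<in> {e \<in> edges V w. u \<in> e}" using e by blast
      then show False using leaf e by blast
    qed
    moreover obtain x y where "e = {x, y}" "x \<in> V" "y \<in> V" "w x y \<noteq> 0"
      using e unfolding edges_def by blast
    ultimately show "e \<in> edges (V - {u}) w" using edge_mem[of x "V - {u}" y w] by blast
  qed
qed

lemma det_leaf:
  assumes g: "wgraph V w" and u: "u \<in> V" and v: "v \<in> V" and uv: "w u v \<noteq> 0"
    and leaf: "{e \<in> edges V w. u \<in> e} = {{u, v}}"
  shows "adj_det (subdiv_verts V w) (subdiv_wt V w) =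
         - (w u v * w u v) * adj_det (subdiv_verts (V - {u}) w) (subdiv_wt (V - {u}) w)"
proof -
  let ?S = "subdiv_verts V w"
  let ?E = "edges V w"
  let ?a = "Inl u :: 'a + 'a set"
  let ?b = "Inr {u, v} :: 'a + 'a set"
  have finV: "finite V" using g unfolding wgraph_def by simp
  have une: "u \<noteq> v" using uv g u unfolding wgraph_def by auto
  have e0: "{u, v} \<in> ?E" using edge_mem[of u V v w] u v uv by blast
  have aS: "?a \<in> ?S" "?b \<in> ?S" using u e0 unfolding subdiv_verts_def by auto
  have fab: "subdiv_wt V w ?a ?b = w u v" using e0 une by simp
  have fba: "subdiv_wt V w ?b ?a = w u v" using e0 une by simp
  have col: "x = ?b" if "x \<in> ?S" and nz1: "subdiv_wt V w x ?a \<noteq> 0" for x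
  proof -
    obtain e where "x = Inr e" "e \<in> ?E" "u \<in> e" using sw_nz[OF nz1] by blast
    then show ?thesis using leaf by blast
  qed
  have row: "y = ?b" if "y \<in> ?S" and nz2: "subdiv_wt V w ?a y \<noteq> 0" for y
  proof -
    obtain e where "y = Inr e" "e \<in> ?E" "u \<in> e" using sw_nz[OF nz2] by blast
    then show ?thesis using leaf by blast
  qed
  have d: "adj_det ?S (subdiv_wt V w) = - (w u v * w u v) * adj_det (?S - {?a, ?b}) (subdiv_wt V w)"
    using det_pendant[OF subdiv_fin[OF finV] aS(1) aS(2) _ col row] fab fba by simp
  have le: "edges (V - {u}) w = ?E - {{u, v}}" using leaf_edges[OF g u leaf] .
  have Seq: "?S - {?a, ?b} = subdiv_verts (V - {u}) w"
    unfolding subdiv_verts_def le by auto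
  have cong: "subdiv_wt V w x y = subdiv_wt (V - {u}) w x y"
    if xin: "x \<in> subdiv_verts (V - {u}) w" and yin: "y \<in> subdiv_verts (V - {u}) w" for x y
  proof (cases x; cases y)
    fix x1 y2 assume xy: "x = Inl x1" "y = Inr y2"
    then have "y2 \<in> ?E - {{u, v}}" using xin yin unfolding subdiv_verts_def le by blast
    then show ?thesis using xy le by simp
  next
    fix x1 y2 assume xy: "x = Inr x1" "y = Inl y2"
    then have "x1 \<in> ?E - {{u, v}}" using xin yin unfolding subdiv_verts_def le by blast
    then show ?thesis using xy le by simp
  qed simp_all
  have dd: "adj_det (subdiv_verts (V - {u}) w) (subdiv_wt V w) =
      adj_det (subdiv_verts (V - {u}) w) (subdiv_wt (V - {u}) w)"
    by (rule adj_det_cong, rule cong)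
  show ?thesis using d dd unfolding Seq by simp
qed

definition cyc_ok :: "'a set \<Rightarrow> ('a \<Rightarrow> 'a \<Rightarrow> real) \<Rightarrow> 'a list \<Rightarrow> bool" where
  "cyc_ok V w vs \<longleftrightarrow> length vs \<ge> 3 \<and> distinct vs \<and> set vs \<subseteq> V \<and>
      (\<forall>i < length vs. w (vs ! i) (vs ! ((i + 1) mod length vs)) \<noteq> 0)"

definition cedges :: "'a list \<Rightarrow> 'a set set" where
  "cedges vs = {{vs ! i, vs ! ((i + 1) mod length vs)} | i. i < length vs}"

lemma is_cycle_alt: "is_cycle V w C \<longleftrightarrow> (\<exists>vs. cyc_ok V w vs \<and> C = cedges vs)"
  unfolding is_cycle_def cyc_ok_def cedges_def by blast

lemma mod_suc_ne: fixes i p :: nat assumes "i < p" "2 \<le> p" shows "(i + 1) mod p \<noteq> i"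
proof (cases "i + 1 < p")
  case True then show ?thesis using mod_less[OF True] by simp
next
  case False
  then have "i + 1 = p" using assms by simp
  then show ?thesis using \<open>2 \<le> p\<close> by simp
qed

lemma cyc_edge_inj:
  assumes d: "distinct vs" and p: "length vs = p" "3 \<le> p" and ij: "i < p" "j < p"
    and eq: "{vs ! i, vs ! ((i + 1) mod p)} = {vs ! j, vs ! ((j + 1) mod p)}"
  shows "i = j"
proof -
  have pos: "0 < p" using p by simp
  have m: "(i + 1) mod p < p" "(j + 1) mod p < p" using pos by simp_all
  have nth: "\<And>a b. a < p \<Longrightarrow> b < p \<Longrightarrow> vs ! a = vs ! b \<Longrightarrow> a = b"
    using d p nth_eq_iff_index_eq by metis
  from eq consider "vs ! i = vs ! j" | "vs ! i = vs ! ((j + 1) mod p) \<and> vs ! ((i + 1) mod p) = vs ! j"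
    unfolding doubleton_eq_iff by blast
  then show ?thesis
  proof cases
    case 1 then show ?thesis using nth ij by blast
  next
    case 2
    then have a: "i = (j + 1) mod p" and b: "(i + 1) mod p = j" using nth ij m by blast+
    show ?thesis
    proof (cases "j + 1 < p")
      case True
      then have i: "i = j + 1" using a by simp
      show ?thesis
      proof (cases "j + 2 < p")
        case True then show ?thesis using b i by simp
      next
        case False
        then have "j + 2 = p" using True by simp
        then have "(i + 1) mod p = 0" using i by simp
        then have "j = 0" using b by simp
        then show ?thesis using \<open>j + 2 = p\<close> p by simp
      qed
    next
      case False
      then have "j + 1 = p" using ij by simp
      then have "i = 0" using a by simp
      then have "1 mod p = j" using b by simp
      then have "j = 1" using p by simp
      then show ?thesis using \<open>j + 1 = p\<close> p by simp
    qed
  qed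
qed

lemma cedges_sub:
  assumes "cyc_ok V w vs" shows "cedges vs \<subseteq> edges V w"
proof
  fix e assume "e \<in> cedges vs"
  then obtain i where i: "i < length vs" "e = {vs ! i, vs ! ((i + 1) mod length vs)}"
    unfolding cedges_def by blast
  have "0 < length vs" using i(1) by linarith
  then have "(i + 1) mod length vs < length vs" by simp
  then have "vs ! i \<in> V" "vs ! ((i + 1) mod length vs) \<in> V"
    using assms i(1) unfolding cyc_ok_def by (auto simp: subset_iff)
  moreover have "w (vs ! i) (vs ! ((i + 1) mod length vs)) \<noteq> 0"
    using assms i(1) unfolding cyc_ok_def by blast
  ultimately show "e \<in> edges V w" using i(2) edge_mem by metis
qed

lemma cedges_Union: assumes "cyc_ok V w vs" shows "\<Union>(cedges vs) = set vs"
proof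
  show "\<Union>(cedges vs) \<subseteq> set vs"
  proof
    fix x assume "x \<in> \<Union>(cedges vs)"
    then obtain i where i: "i < length vs" "x \<in> {vs ! i, vs ! ((i + 1) mod length vs)}"
      unfolding cedges_def by blast
    have "0 < length vs" using i(1) by linarith
    then have "(i + 1) mod length vs < length vs" by simp
    then show "x \<in> set vs" using i by auto
  qed
next
  show "set vs \<subseteq> \<Union>(cedges vs)"
  proof
    fix x assume "x \<in> set vs"
    then obtain i where i: "i < length vs" "x = vs ! i" by (metis in_set_conv_nth)
    then have "{vs ! i, vs ! ((i + 1) mod length vs)} \<in> cedges vs" unfolding cedges_def by blast
    then show "x \<in> \<Union>(cedges vs)" using i by blast
  qed
qed

lemma cyc_two:
  assumes c: "cyc_ok V w vs" and x: "x \<in> set vs"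
  shows "\<exists>c1 c2. c1 \<in> cedges vs \<and> c2 \<in> cedges vs \<and> c1 \<noteq> c2 \<and> x \<in> c1 \<and> x \<in> c2"
proof -
  define p where "p = length vs"
  have p3: "3 \<le> p" and d: "distinct vs" using c unfolding cyc_ok_def p_def by auto
  obtain i where i: "i < p" "x = vs ! i" using x unfolding p_def by (metis in_set_conv_nth)
  define i' where "i' = (i + p - 1) mod p"
  have i'p: "i' < p" unfolding i'_def using p3 by simp
  have i'1: "(i' + 1) mod p = i"
  proof -
    have "(i' + 1) mod p = (i + p - 1 + 1) mod p" unfolding i'_def by (simp add: mod_Suc_eq)
    also have "i + p - 1 + 1 = i + p" using p3 by simp
    finally show ?thesis using i by simp
  qed
  have ne: "i' \<noteq> i"
  proof
    assume "i' = i"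
    then have "(i + 1) mod p = i" using i'1 by simp
    then show False using mod_suc_ne[of i p] i p3 by simp
  qed
  define c1 where "c1 = {vs ! i, vs ! ((i + 1) mod p)}"
  define c2 where "c2 = {vs ! i', vs ! ((i' + 1) mod p)}"
  have "c1 \<in> cedges vs" unfolding c1_def cedges_def p_def using i(1) p_def by blast
  moreover have "c2 \<in> cedges vs" unfolding c2_def cedges_def p_def using i'p p_def by blast
  moreover have "c1 \<noteq> c2"
    using cyc_edge_inj[OF d p_def[symmetric] p3 i(1) i'p] ne unfolding c1_def c2_def by metis
  moreover have "x \<in> c1" "x \<in> c2" unfolding c1_def c2_def using i i'1 by auto
  ultimately show ?thesis by blast
qed

lemma deg_cycle:
  assumes g: "wgraph V w" and c: "cyc_ok V w vs" and x: "x \<in> set vs"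
  shows "2 \<le> card {e \<in> edges V w. x \<in> e}"
proof -
  obtain c1 c2 where cc: "c1 \<in> cedges vs" "c2 \<in> cedges vs" "c1 \<noteq> c2" "x \<in> c1" "x \<in> c2"
    using cyc_two[OF c x] by blast
  have "{c1, c2} \<subseteq> {e \<in> edges V w. x \<in> e}" using cc cedges_sub[OF c] by blast
  moreover have "finite {e \<in> edges V w. x \<in> e}"
    by (rule finite_subset[of _ "edges V w"]) (use edges_fin g in \<open>auto simp: wgraph_def\<close>)
  ultimately have "card {c1, c2} \<le> card {e \<in> edges V w. x \<in> e}" by (rule card_mono[rotated])
  then show ?thesis using cc(3) by simp
qed

lemma cyc_mono: "cyc_ok V w vs \<Longrightarrow> V \<subseteq> V' \<Longrightarrow> cyc_ok V' w vs"
  unfolding cyc_ok_def by blast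

lemma wg_sym: "wgraph V w \<Longrightarrow> x \<in> V \<Longrightarrow> y \<in> V \<Longrightarrow> w x y = w y x"
  unfolding wgraph_def by blast

lemma wg_diag: "wgraph V w \<Longrightarrow> x \<in> V \<Longrightarrow> w x x = 0"
  unfolding wgraph_def by blast

lemma wg_ne: "wgraph V w \<Longrightarrow> x \<in> V \<Longrightarrow> w x y \<noteq> 0 \<Longrightarrow> y \<noteq> x"
  using wg_diag by metis

definition rel :: "'a set \<Rightarrow> ('a \<Rightarrow> 'a \<Rightarrow> real) \<Rightarrow> ('a \<times> 'a) set" where
  "rel V w = {(x, y). x \<in> V \<and> y \<in> V \<and> w x y \<noteq> 0}"

lemma conn_alt: "connected_wg V w \<longleftrightarrow> V \<noteq> {} \<and> (\<forall>u\<in>V. \<forall>v\<in>V. (u, v) \<in> (rel V w)\<^sup>*)"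
  unfolding connected_wg_def rel_def by simp

lemma rel_conv: assumes "wgraph V w" shows "(rel V w)\<inverse> = rel V w"
proof -
  have sw: "\<And>x y. x \<in> V \<Longrightarrow> y \<in> V \<Longrightarrow> w x y = w y x" using assms wg_sym by metis
  show ?thesis
  proof (rule set_eqI)
    fix z :: "'a \<times> 'a"
    obtain x y where z: "z = (x, y)" by fastforce
    show "z \<in> (rel V w)\<inverse> \<longleftrightarrow> z \<in> rel V w" unfolding z rel_def using sw by auto
  qed
qed

lemma rel_sym:
  assumes "wgraph V w" "(x, y) \<in> (rel V w)\<^sup>*" shows "(y, x) \<in> (rel V w)\<^sup>*"
  using rtrancl_converseI[OF assms(2)] rel_conv[OF assms(1)] by simp

lemma rel_in: "(x, y) \<in> rel V w \<Longrightarrow> x \<in> V \<and> y \<in> V \<and> w x y \<noteq> 0"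
  unfolding rel_def by simp

lemma rel_I: "x \<in> V \<Longrightarrow> y \<in> V \<Longrightarrow> w x y \<noteq> 0 \<Longrightarrow> (x, y) \<in> rel V w"
  unfolding rel_def by simp

lemma leaf_nbr:
  assumes g: "wgraph V w" and u: "u \<in> V" and leaf: "{e \<in> edges V w. u \<in> e} = {{u, v}}"
    and y: "y \<in> V" and uy: "w u y \<noteq> 0"
  shows "y = v"
proof -
  have "{u, y} \<in> {e \<in> edges V w. u \<in> e}" using edge_mem[of u V y w] u y uy by blast
  then have "{u, y} \<in> {{u, v}}" using leaf by simp
  then have "{u, y} = {u, v}" by simp
  moreover have "y \<noteq> u" using wg_ne[OF g u uy] .
  ultimately show ?thesis unfolding doubleton_eq_iff by blast
qed

lemma conn_leaf:
  assumes g: "wgraph V w" and conn: "connected_wg V w" and u: "u \<in> V" and v: "v \<in> V"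
    and uv: "w u v \<noteq> 0" and leaf: "{e \<in> edges V w. u \<in> e} = {{u, v}}"
  shows "connected_wg (V - {u}) w"
proof -
  let ?R = "rel V w" and ?R' = "rel (V - {u}) w"
  have une: "u \<noteq> v" using wg_ne[OF g u uv] by simp
  have nb: "y = v" if "y \<in> V" "w u y \<noteq> 0" for y using leaf_nbr[OF g u leaf that] .
  have nb': "y = v" if "y \<in> V" "w y u \<noteq> 0" for y
    using nb[OF that(1)] that wg_sym[OF g that(1) u] by simp
  have main: "(z = u \<and> (a, v) \<in> ?R'\<^sup>*) \<or> (z \<noteq> u \<and> (a, z) \<in> ?R'\<^sup>*)"
    if a: "a \<in> V - {u}" and az: "(a, z) \<in> ?R\<^sup>*" for a z
    using az
  proof (induction rule: rtrancl_induct)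
    case base then show ?case using a by simp
  next
    case (step y z)
    have yz: "y \<in> V" "z \<in> V" "w y z \<noteq> 0" using rel_in[OF step.hyps(2)] by auto
    show ?case
    proof (cases "y = u")
      case True
      then have "z = v" using nb yz by blast
      then show ?thesis using step.IH True une by blast
    next
      case False
      then have ay: "(a, y) \<in> ?R'\<^sup>*" using step.IH by blast
      show ?thesis
      proof (cases "z = u")
        case True
        then have "y = v" using nb' yz by blast
        then show ?thesis using ay True by blast
      next
        case False
        have "(y, z) \<in> ?R'" using rel_I[of y "V - {u}" z w] yz False \<open>y \<noteq> u\<close> by blast
        then show ?thesis using ay False by (meson rtrancl.rtrancl_into_rtrancl)
      qed
    qed
  qed
  show ?thesis unfolding conn_alt
  proof (intro conjI ballI)
    show "V - {u} \<noteq> {}" using v une by blast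
  next
    fix a b assume a: "a \<in> V - {u}" and b: "b \<in> V - {u}"
    have "(a, b) \<in> ?R\<^sup>*" using conn a b unfolding conn_alt by blast
    then show "(a, b) \<in> ?R'\<^sup>*" using main[OF a] b by blast
  qed
qed

definition wdel :: "('a \<Rightarrow> 'a \<Rightarrow> real) \<Rightarrow> 'a set \<Rightarrow> 'a \<Rightarrow> 'a \<Rightarrow> real" where
  "wdel w e = (\<lambda>x y. if {x, y} = e then 0 else w x y)"

lemma wgraph_wdel: "wgraph V w \<Longrightarrow> wgraph V (wdel w e)"
  unfolding wgraph_def wdel_def by (simp add: insert_commute)

lemma edges_wdel: "edges V (wdel w e) = edges V w - {e}"
proof
  show "edges V (wdel w e) \<subseteq> edges V w - {e}"
  proof
    fix f assume "f \<in> edges V (wdel w e)"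
    then obtain x y where f: "f = {x, y}" "x \<in> V" "y \<in> V" "wdel w e x y \<noteq> 0"
      unfolding edges_def by blast
    then have "{x, y} \<noteq> e" "w x y \<noteq> 0" unfolding wdel_def by (auto split: if_splits)
    then show "f \<in> edges V w - {e}" using f edge_mem[of x V y w] by blast
  qed
next
  show "edges V w - {e} \<subseteq> edges V (wdel w e)"
  proof
    fix f assume f0: "f \<in> edges V w - {e}"
    then obtain x y where f: "f = {x, y}" "x \<in> V" "y \<in> V" "w x y \<noteq> 0"
      unfolding edges_def by blast
    then have "wdel w e x y \<noteq> 0" using f0 unfolding wdel_def by auto
    then show "f \<in> edges V (wdel w e)" using f edge_mem[of x V y "wdel w e"] by blast
  qed
qed

lemma cyc_wdel:
  assumes "cyc_ok V w vs" "e \<notin> cedges vs" shows "cyc_ok V (wdel w e) vs"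
proof -
  have "wdel w e (vs ! i) (vs ! ((i + 1) mod length vs)) \<noteq> 0" if i: "i < length vs" for i
  proof -
    have "{vs ! i, vs ! ((i + 1) mod length vs)} \<in> cedges vs" unfolding cedges_def using i by blast
    then have "{vs ! i, vs ! ((i + 1) mod length vs)} \<noteq> e" using assms(2) by metis
    then show ?thesis using assms(1) i unfolding cyc_ok_def wdel_def by simp
  qed
  then show ?thesis using assms(1) unfolding cyc_ok_def by blast
qed

lemma cyc_wdel_back:
  assumes "cyc_ok V (wdel w e) vs" shows "cyc_ok V w vs" "e \<notin> cedges vs"
proof -
  have "w (vs ! i) (vs ! ((i + 1) mod length vs)) \<noteq> 0" if i: "i < length vs" for i
  proof -
    have "wdel w e (vs ! i) (vs ! ((i + 1) mod length vs)) \<noteq> 0" using assms i unfolding cyc_ok_def by blast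
    then show ?thesis unfolding wdel_def by (simp split: if_splits)
  qed
  then show "cyc_ok V w vs" using assms unfolding cyc_ok_def by blast
  show "e \<notin> cedges vs"
  proof
    assume "e \<in> cedges vs"
    then obtain i where "i < length vs" "e = {vs ! i, vs ! ((i + 1) mod length vs)}"
      unfolding cedges_def by blast
    then have "wdel w e (vs ! i) (vs ! ((i + 1) mod length vs)) = 0" unfolding wdel_def by simp
    then show False using assms \<open>i < length vs\<close> unfolding cyc_ok_def by blast
  qed
qed

lemma path_lemma:
  assumes st: "\<And>j. m \<le> j \<Longrightarrow> j < n \<Longrightarrow> (vs ! j, vs ! Suc j) \<in> Q"
  shows "m \<le> k \<Longrightarrow> k \<le> n \<Longrightarrow> (vs ! m, vs ! k) \<in> Q\<^sup>*"
proof (induction k)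
  case 0 then show ?case by simp
next
  case (Suc k)
  show ?case
  proof (cases "m = Suc k")
    case True then show ?thesis by simp
  next
    case False
    then have "m \<le> k" using Suc.prems by simp
    then have "(vs ! m, vs ! k) \<in> Q\<^sup>*" using Suc by simp
    moreover have "(vs ! k, vs ! Suc k) \<in> Q" using st \<open>m \<le> k\<close> Suc.prems by simp
    ultimately show ?thesis by (rule rtrancl_into_rtrancl)
  qed
qed

lemma conn_del:
  assumes g: "wgraph V w" and conn: "connected_wg V w" and c: "cyc_ok V w vs"
    and e: "e \<in> cedges vs"
  shows "connected_wg V (wdel w e)"
proof -
  define p where "p = length vs"
  have p3: "3 \<le> p" and d: "distinct vs" and sV: "set vs \<subseteq> V"
    and wz: "\<And>i. i < p \<Longrightarrow> w (vs ! i) (vs ! ((i + 1) mod p)) \<noteq> 0"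
    using c unfolding cyc_ok_def p_def by auto
  obtain i where i: "i < p" "e = {vs ! i, vs ! ((i + 1) mod p)}"
    using e unfolding cedges_def p_def by blast
  let ?Q = "rel V (wdel w e)"
  have g': "wgraph V (wdel w e)" using wgraph_wdel[OF g] .
  have inV: "vs ! j \<in> V" if "j < p" for j using sV that unfolding p_def by auto
  have stp: "(vs ! j, vs ! ((j + 1) mod p)) \<in> ?Q" if j: "j < p" "j \<noteq> i" for j
  proof -
    have "{vs ! j, vs ! ((j + 1) mod p)} \<noteq> e"
      using cyc_edge_inj[OF d p_def[symmetric] p3 j(1) i(1)] j(2) i(2) by metis
    moreover have "(j + 1) mod p < p" using p3 by simp
    ultimately show ?thesis using rel_I[of "vs ! j" V "vs ! ((j + 1) mod p)" "wdel w e"] inV j wz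
      unfolding wdel_def by simp
  qed
  have stp2: "(vs ! j, vs ! Suc j) \<in> ?Q" if "j + 1 < p" "j \<noteq> i" for j
    using stp[of j] that by simp
  have key: "(vs ! ((i + 1) mod p), vs ! i) \<in> ?Q\<^sup>*"
  proof (cases "i + 1 = p")
    case True
    have "(vs ! 0, vs ! i) \<in> ?Q\<^sup>*"
      by (rule path_lemma[of 0 i]) (use stp2 True in auto)
    then show ?thesis using True by simp
  next
    case False
    then have ip: "i + 1 < p" using i by simp
    have 1: "(vs ! 0, vs ! i) \<in> ?Q\<^sup>*"
      by (rule path_lemma[of 0 i]) (use stp2 ip in auto)
    have 2: "(vs ! (i + 1), vs ! (p - 1)) \<in> ?Q\<^sup>*"
      by (rule path_lemma[of "i + 1" "p - 1"]) (use stp2 ip in auto)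
    have "(vs ! (p - 1), vs ! (((p - 1) + 1) mod p)) \<in> ?Q" using stp[of "p - 1"] p3 ip by simp
    then have 3: "(vs ! (p - 1), vs ! 0) \<in> ?Q" using p3 by simp
    have "(vs ! (i + 1), vs ! i) \<in> ?Q\<^sup>*" using 2 3 1
      by (meson rtrancl_into_rtrancl rtrancl_trans)
    then show ?thesis using ip by simp
  qed
  have key2: "(vs ! i, vs ! ((i + 1) mod p)) \<in> ?Q\<^sup>*" using rel_sym[OF g' key] .
  have sub: "rel V w \<subseteq> ?Q\<^sup>*"
  proof
    fix xy assume xy: "xy \<in> rel V w"
    obtain x y where xy': "xy = (x, y)" by fastforce
    have "(x, y) \<in> rel V w" using xy xy' by simp
    then have hh: "x \<in> V \<and> y \<in> V \<and> w x y \<noteq> 0" by (rule rel_in)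
    then have h: "x \<in> V" "y \<in> V" "w x y \<noteq> 0" by simp_all
    show "xy \<in> ?Q\<^sup>*"
    proof (cases "{x, y} = e")
      case False
      then have "(x, y) \<in> ?Q" using rel_I[of x V y "wdel w e"] h unfolding wdel_def by simp
      then show ?thesis unfolding xy' by (rule r_into_rtrancl)
    next
      case True
      have "{x, y} = {vs ! i, vs ! ((i + 1) mod p)}" using True i(2) by simp
      then have "(x = vs ! i \<and> y = vs ! ((i + 1) mod p)) \<or> (x = vs ! ((i + 1) mod p) \<and> y = vs ! i)"
        unfolding doubleton_eq_iff .
      then show ?thesis using key key2 unfolding xy' by (elim disjE conjE) simp_all
    qed
  qed
  show ?thesis unfolding conn_alt
  proof (intro conjI ballI)
    show "V \<noteq> {}" using conn unfolding conn_alt by blast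
  next
    fix a b assume "a \<in> V" "b \<in> V"
    then have "(a, b) \<in> (rel V w)\<^sup>*" using conn unfolding conn_alt by blast
    then show "(a, b) \<in> ?Q\<^sup>*" using rtrancl_subset_rtrancl[OF sub] by blast
  qed
qed

lemma conn_card:
  assumes g: "wgraph V w" and conn: "connected_wg V w"
  shows "card V \<le> card (edges V w) + 1"
proof -
  have finV: "finite V" using g unfolding wgraph_def by blast
  obtain r where r: "r \<in> V" using conn unfolding conn_alt by blast
  let ?R = "rel V w"
  define d where "d v = (LEAST n. (r, v) \<in> ?R ^^ n)" for v
  have ex: "\<exists>n. (r, v) \<in> ?R ^^ n" if "v \<in> V" for v
    using conn r that unfolding conn_alt by (simp add: rtrancl_power)
  have dR: "(r, v) \<in> ?R ^^ (d v)" if "v \<in> V" for v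
    unfolding d_def using ex[OF that] by (rule LeastI_ex)
  have dmin: "d v \<le> n" if "(r, v) \<in> ?R ^^ n" for v n
    unfolding d_def using that by (rule Least_le)
  have par: "\<exists>y. (y, v) \<in> ?R \<and> d y < d v" if v: "v \<in> V" "v \<noteq> r" for v
  proof (cases "d v")
    case 0
    then have "(r, v) \<in> ?R ^^ 0" using dR[OF v(1)] by simp
    then show ?thesis using v(2) by simp
  next
    case (Suc k)
    then have "(r, v) \<in> ?R ^^ k O ?R" using dR[OF v(1)] by simp
    then obtain y where y: "(r, y) \<in> ?R ^^ k" "(y, v) \<in> ?R" by blast
    have "d y \<le> k" using dmin[OF y(1)] .
    then show ?thesis using y(2) Suc by auto
  qed
  define pa where "pa v = (SOME y. (y, v) \<in> ?R \<and> d y < d v)" for v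
  have pa: "(pa v, v) \<in> ?R \<and> d (pa v) < d v" if "v \<in> V - {r}" for v
    unfolding pa_def using par[of v] that by (metis (mono_tags, lifting) Diff_iff singletonI someI_ex)
  define f where "f v = {pa v, v}" for v
  have sub: "f ` (V - {r}) \<subseteq> edges V w"
  proof
    fix e assume "e \<in> f ` (V - {r})"
    then obtain v where v: "v \<in> V - {r}" "e = f v" by blast
    have "pa v \<in> V \<and> v \<in> V \<and> w (pa v) v \<noteq> 0" using rel_in[OF conjunct1[OF pa[OF v(1)]]] .
    then show "e \<in> edges V w" unfolding v(2) f_def using edge_mem by metis
  qed
  have inj: "inj_on f (V - {r})"
  proof (rule inj_onI)
    fix x y assume x: "x \<in> V - {r}" and y: "y \<in> V - {r}" and fxy: "f x = f y"
    have "pa x = pa y \<and> x = y \<or> pa x = y \<and> x = pa y" using fxy unfolding f_def doubleton_eq_iff .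
    moreover have "\<not> (pa x = y \<and> x = pa y)"
    proof
      assume h: "pa x = y \<and> x = pa y"
      have "d (pa x) < d x" "d (pa y) < d y" using pa[OF x] pa[OF y] by auto
      then show False using h by (metis less_asym)
    qed
    ultimately show "x = y" by blast
  qed
  have "card (V - {r}) \<le> card (edges V w)"
    using card_inj_on_le[OF inj sub] edges_fin[OF finV] by simp
  then show ?thesis using r finV by simp
qed

lemma two_elems: assumes "2 \<le> card A" shows "\<exists>x\<in>A. \<exists>y\<in>A. x \<noteq> y"
proof -
  have fin: "finite A" using assms by (metis card.infinite not_numeral_le_zero)
  have "A \<noteq> {}" using assms by auto
  then obtain x where x: "x \<in> A" by blast
  have "card (A - {x}) \<ge> 1" using assms x fin by simp
  then have "A - {x} \<noteq> {}" by (cases "A - {x} = {}") simp_all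
  then obtain y where "y \<in> A - {x}" by blast
  then show ?thesis using x by blast
qed

lemma min2_cycle:
  assumes g: "wgraph V w" and ne: "V \<noteq> {}"
    and deg: "\<forall>v\<in>V. 2 \<le> card {e \<in> edges V w. v \<in> e}"
  shows "\<exists>vs. cyc_ok V w vs"
proof -
  have finV: "finite V" using g unfolding wgraph_def by blast
  define isp where "isp xs \<longleftrightarrow> xs \<noteq> [] \<and> distinct xs \<and> set xs \<subseteq> V \<and>
     (\<forall>i. Suc i < length xs \<longrightarrow> w (xs ! i) (xs ! Suc i) \<noteq> 0)" for xs
  obtain v where v: "v \<in> V" using ne by blast
  have isv: "isp [v]" unfolding isp_def using v by simp
  have bnd: "\<forall>xs. isp xs \<longrightarrow> length xs < card V + 1"
  proof (intro allI impI)
    fix xs assume "isp xs"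
    then have "distinct xs" "set xs \<subseteq> V" unfolding isp_def by auto
    then have "length xs \<le> card V" using card_mono[OF finV] distinct_card by metis
    then show "length xs < card V + 1" by simp
  qed
  obtain P where P: "isp P" and Pmax: "\<forall>y. isp y \<longrightarrow> length y \<le> length P"
    using ex_has_greatest_nat[of isp "[v]" length "card V + 1"] isv bnd by blast
  have Pne: "P \<noteq> []" and Pd: "distinct P" and PV: "set P \<subseteq> V"
    and Pw: "\<And>i. Suc i < length P \<Longrightarrow> w (P ! i) (P ! Suc i) \<noteq> 0"
    using P unfolding isp_def by auto
  define v0 where "v0 = P ! 0"
  have v0V: "v0 \<in> V" unfolding v0_def using Pne PV by (simp add: subset_iff)
  obtain e1 e2 where e12: "e1 \<in> {e \<in> edges V w. v0 \<in> e}" "e2 \<in> {e \<in> edges V w. v0 \<in> e}" "e1 \<noteq> e2"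
  proof -
    have "2 \<le> card {e \<in> edges V w. v0 \<in> e}" using deg v0V by blast
    from two_elems[OF this] show ?thesis using that by blast
  qed
  obtain z1 where z1: "z1 \<in> V" "e1 = {v0, z1}" "w v0 z1 \<noteq> 0" "z1 \<noteq> v0"
    using edge_at[OF g, of e1 v0] e12(1) by blast
  obtain z2 where z2: "z2 \<in> V" "e2 = {v0, z2}" "w v0 z2 \<noteq> 0" "z2 \<noteq> v0"
    using edge_at[OF g, of e2 v0] e12(2) by blast
  have z12: "z1 \<noteq> z2" using e12(3) z1(2) z2(2) by blast
  obtain z where z: "z \<in> V" "w v0 z \<noteq> 0" "z \<noteq> v0" "Suc 0 < length P \<Longrightarrow> z \<noteq> P ! 1"
  proof (cases "Suc 0 < length P \<and> z1 = P ! 1")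
    case True
    then show ?thesis using that[of z2] z2 z12 by auto
  next
    case False
    then show ?thesis using that[of z1] z1 by auto
  qed
  have zP: "z \<in> set P"
  proof (rule ccontr)
    assume nz: "z \<notin> set P"
    have "isp (z # P)" unfolding isp_def
    proof (intro conjI allI impI)
      show "z # P \<noteq> []" by simp
      show "distinct (z # P)" using nz Pd by simp
      show "set (z # P) \<subseteq> V" using z(1) PV by simp
    next
      fix i assume i: "Suc i < length (z # P)"
      show "w ((z # P) ! i) ((z # P) ! Suc i) \<noteq> 0"
      proof (cases i)
        case 0
        have "w z v0 \<noteq> 0" using z(2) wg_sym[OF g v0V z(1)] by simp
        then show ?thesis using 0 unfolding v0_def by simp
      next
        case (Suc k)
        then show ?thesis using Pw[of k] i by simp
      qed
    qed
    then have "length (z # P) \<le> length P" using Pmax by blast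
    then show False by simp
  qed
  then obtain j where j: "j < length P" "P ! j = z" by (metis in_set_conv_nth)
  have j0: "j \<noteq> 0"
  proof
    assume "j = 0" then show False using j z(3) unfolding v0_def by simp
  qed
  have j1: "j \<noteq> 1" using j z(4) by auto
  define vs where "vs = take (Suc j) P"
  have lvs: "length vs = Suc j" unfolding vs_def using j(1) by simp
  have "cyc_ok V w vs" unfolding cyc_ok_def
  proof (intro conjI allI impI)
    show "3 \<le> length vs" using lvs j0 j1 by simp
    show "distinct vs" unfolding vs_def using Pd by simp
    show "set vs \<subseteq> V" unfolding vs_def using PV set_take_subset by (metis subset_trans)
  next
    fix i assume i: "i < length vs"
    show "w (vs ! i) (vs ! ((i + 1) mod length vs)) \<noteq> 0"
    proof (cases "i < j")
      case True
      then have "(i + 1) mod length vs = Suc i" using lvs by simp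
      moreover have "vs ! i = P ! i" "vs ! Suc i = P ! Suc i" unfolding vs_def using True by simp_all
      moreover have "Suc i < length P" using True j(1) by simp
      ultimately show ?thesis using Pw by simp
    next
      case False
      then have ij: "i = j" using i lvs by simp
      then have "(i + 1) mod length vs = 0" using lvs by simp
      moreover have "vs ! i = z" "vs ! 0 = v0" unfolding vs_def v0_def using ij j by simp_all
      moreover have "w z v0 \<noteq> 0" using z(2) wg_sym[OF g v0V z(1)] by simp
      ultimately show ?thesis by simp
    qed
  qed
  then show ?thesis by blast
qed

lemma edges_remove: "edges (V - {u}) w = {e \<in> edges V w. u \<notin> e}"
  unfolding edges_def by blast

lemma wgraph_sub: "wgraph V w \<Longrightarrow> V' \<subseteq> V \<Longrightarrow> wgraph V' w"
  unfolding wgraph_def by (meson finite_subset subset_iff)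

lemma card_split: "finite A \<Longrightarrow> card A = card {x \<in> A. P x} + card {x \<in> A. \<not> P x}"
proof -
  assume fin: "finite A"
  have "A = {x \<in> A. P x} \<union> {x \<in> A. \<not> P x}" by blast
  moreover have "card ({x \<in> A. P x} \<union> {x \<in> A. \<not> P x}) = card {x \<in> A. P x} + card {x \<in> A. \<not> P x}"
    by (rule card_Un_disjoint) (use fin in auto)
  ultimately show ?thesis by simp
qed

lemma cycle_exists:
  assumes "wgraph V w" "card V \<le> card (edges V w)" "edges V w \<noteq> {}"
  shows "\<exists>vs. cyc_ok V w vs"
  using assms
proof (induction "card V" arbitrary: V rule: less_induct)
  case less
  have g: "wgraph V w" using less.prems by blast
  have finV: "finite V" using g unfolding wgraph_def by blast
  have finE: "finite (edges V w)" using edges_fin[OF finV] .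
  obtain e0 where e0: "e0 \<in> edges V w" using less.prems(3) by blast
  have "V \<noteq> {}" using e0 edge_card2[OF g e0] edges_sub[OF e0] by auto
  show ?case
  proof (cases "\<exists>u\<in>V. card {e \<in> edges V w. u \<in> e} \<le> 1")
    case True
    then obtain u where u: "u \<in> V" "card {e \<in> edges V w. u \<in> e} \<le> 1" by blast
    let ?V = "V - {u}"
    have eq: "edges ?V w = {e \<in> edges V w. u \<notin> e}" by (rule edges_remove)
    have cs: "card (edges V w) = card {e \<in> edges V w. u \<in> e} + card (edges ?V w)"
      unfolding eq by (rule card_split[OF finE])
    have cV: "card ?V = card V - 1" using u finV by simp
    have c1: "card ?V \<le> card (edges ?V w)" using cs cV u(2) less.prems(2) by linarith
    have ne: "edges ?V w \<noteq> {}"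
    proof
      assume em: "edges ?V w = {}"
      then have "card ?V = 0" using c1 by simp
      then have "?V = {}" using finV by simp
      then have "V \<subseteq> {u}" by blast
      then have "card e0 \<le> 1" using edges_sub[OF e0]
        by (metis card.empty card.insert empty_iff finite.intros(1) card_mono finite_subset subset_singletonD
             order_refl le_zero_eq zero_le_one One_nat_def)
      then show False using edge_card2[OF g e0] by simp
    qed
    have lt: "card ?V < card V" using u finV by (meson card_Diff1_less)
    have "\<exists>vs. cyc_ok ?V w vs"
      using less.hyps[OF lt wgraph_sub[OF g, of ?V] c1 ne] by blast
    then show ?thesis using cyc_mono by blast
  next
    case False
    then have "\<forall>v\<in>V. 2 \<le> card {e \<in> edges V w. v \<in> e}" by auto
    then show ?thesis using min2_cycle[OF g \<open>V \<noteq> {}\<close>] by blast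
  qed
qed

lemma handshake:
  assumes g: "wgraph V w"
  shows "(\<Sum>v\<in>V. card {e \<in> edges V w. v \<in> e}) = 2 * card (edges V w)"
proof -
  have finV: "finite V" using g unfolding wgraph_def by blast
  have finE: "finite (edges V w)" using edges_fin[OF finV] .
  have 1: "card {e \<in> edges V w. v \<in> e} = (\<Sum>e\<in>edges V w. if v \<in> e then 1 else 0)" for v
  proof -
    have "card {e \<in> edges V w. v \<in> e} = (\<Sum>e\<in>{e \<in> edges V w. v \<in> e}. 1)" by simp
    also have "\<dots> = (\<Sum>e\<in>edges V w. if v \<in> e then 1 else 0)" by (rule sum.inter_filter[OF finE])
    finally show ?thesis .
  qed
  have 2: "(\<Sum>v\<in>V. if v \<in> e then 1 else 0) = (2::nat)" if e: "e \<in> edges V w" for e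
  proof -
    have "(\<Sum>v\<in>V. if v \<in> e then 1 else 0) = (\<Sum>v\<in>{v \<in> V. v \<in> e}. (1::nat))"
      by (rule sum.inter_filter[OF finV, symmetric])
    also have "{v \<in> V. v \<in> e} = e" using edges_sub[OF e] by blast
    finally show ?thesis using edge_card2[OF g e] by simp
  qed
  have "(\<Sum>v\<in>V. card {e \<in> edges V w. v \<in> e}) = (\<Sum>v\<in>V. \<Sum>e\<in>edges V w. if v \<in> e then 1 else 0)"
    using 1 by simp
  also have "\<dots> = (\<Sum>e\<in>edges V w. \<Sum>v\<in>V. if v \<in> e then 1 else 0)" by (rule sum.swap)
  also have "\<dots> = (\<Sum>e\<in>edges V w. 2)" using 2 by simp
  finally show ?thesis by simp
qed

lemma first_cedge: "cyc_ok V w vs \<Longrightarrow> {vs ! 0, vs ! (1 mod length vs)} \<in> cedges vs"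
  unfolding cyc_ok_def cedges_def by force

lemma two_cycles_contra:
  assumes g: "wgraph V w" and conn: "connected_wg V w"
    and c1: "cyc_ok V w vs1" and c2: "cyc_ok V w vs2"
    and e1: "e \<in> cedges vs1" and e2: "e \<notin> cedges vs2"
    and card: "card (edges V w) \<le> card V"
  shows False
proof -
  have finV: "finite V" using g unfolding wgraph_def by blast
  have finE: "finite (edges V w)" using edges_fin[OF finV] .
  define w1 where "w1 = wdel w e"
  have g1: "wgraph V w1" unfolding w1_def by (rule wgraph_wdel[OF g])
  have conn1: "connected_wg V w1" unfolding w1_def by (rule conn_del[OF g conn c1 e1])
  have c2': "cyc_ok V w1 vs2" unfolding w1_def by (rule cyc_wdel[OF c2 e2])
  define e' where "e' = {vs2 ! 0, vs2 ! (1 mod length vs2)}"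
  have e'2: "e' \<in> cedges vs2" unfolding e'_def by (rule first_cedge[OF c2])
  define w2 where "w2 = wdel w1 e'"
  have conn2: "connected_wg V w2" unfolding w2_def by (rule conn_del[OF g1 conn1 c2' e'2])
  have g2: "wgraph V w2" unfolding w2_def by (rule wgraph_wdel[OF g1])
  have E2: "edges V w2 = edges V w - {e} - {e'}" unfolding w2_def w1_def edges_wdel ..
  have eE: "e \<in> edges V w" using cedges_sub[OF c1] e1 by blast
  have e'E: "e' \<in> edges V w" using cedges_sub[OF c2] e'2 by blast
  have ne: "e' \<noteq> e" using e'2 e2 by blast
  have "card (edges V w) = Suc (card (edges V w - {e}))" using card.remove[OF finE eE] .
  moreover have "card (edges V w - {e}) = Suc (card (edges V w - {e} - {e'}))"
    using card.remove[of "edges V w - {e}" e'] finE e'E ne by simp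
  moreover have "card V \<le> card (edges V w2) + 1" by (rule conn_card[OF g2 conn2])
  ultimately show False using E2 card by simp
qed

lemma uni_iff:
  assumes g: "wgraph V w" and conn: "connected_wg V w"
  shows "unicyclic V w \<longleftrightarrow> card (edges V w) = card V"
proof -
  have finV: "finite V" using g unfolding wgraph_def by blast
  have finE: "finite (edges V w)" using edges_fin[OF finV] .
  have Vne: "V \<noteq> {}" using conn unfolding conn_alt by blast
  then have cV: "card V > 0" using finV by (simp add: card_gt_0_iff)
  show ?thesis
  proof
    assume u: "unicyclic V w"
    then obtain C where C: "is_cycle V w C" and uq: "\<And>C'. is_cycle V w C' \<Longrightarrow> C' = C"
      unfolding unicyclic_def by blast
    obtain vs where vs: "cyc_ok V w vs" "C = cedges vs" using C unfolding is_cycle_alt by blast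
    define e where "e = {vs ! 0, vs ! (1 mod length vs)}"
    have eC: "e \<in> cedges vs" unfolding e_def by (rule first_cedge[OF vs(1)])
    have eE: "e \<in> edges V w" using cedges_sub[OF vs(1)] eC by blast
    define w1 where "w1 = wdel w e"
    have g1: "wgraph V w1" unfolding w1_def by (rule wgraph_wdel[OF g])
    have conn1: "connected_wg V w1" unfolding w1_def by (rule conn_del[OF g conn vs(1) eC])
    have E1: "edges V w1 = edges V w - {e}" unfolding w1_def by (rule edges_wdel)
    have cE: "card (edges V w) = Suc (card (edges V w1))" unfolding E1 using card.remove[OF finE eE] .
    have le: "card V \<le> card (edges V w1) + 1" by (rule conn_card[OF g1 conn1])
    show "card (edges V w) = card V"
    proof (rule ccontr)
      assume "card (edges V w) \<noteq> card V"
      then have c1: "card V \<le> card (edges V w1)" using cE le by simp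
      have "edges V w1 \<noteq> {}" using c1 cV by auto
      then obtain vs' where vs': "cyc_ok V w1 vs'" using cycle_exists[OF g1 c1] by blast
      have "cyc_ok V w vs'" "e \<notin> cedges vs'" using cyc_wdel_back[OF vs'[unfolded w1_def]] by auto
      then have "is_cycle V w (cedges vs')" "cedges vs' \<noteq> C" unfolding is_cycle_alt using eC vs(2) by auto
      then show False using uq by blast
    qed
  next
    assume ce: "card (edges V w) = card V"
    then have "edges V w \<noteq> {}" using cV by auto
    then obtain vs where vs: "cyc_ok V w vs" using cycle_exists[OF g] ce by auto
    have "is_cycle V w (cedges vs)" unfolding is_cycle_alt using vs by blast
    moreover have "C' = cedges vs" if C': "is_cycle V w C'" for C'
    proof (rule ccontr)
      assume ne: "C' \<noteq> cedges vs"
      obtain vs' where vs': "cyc_ok V w vs'" "C' = cedges vs'" using C' unfolding is_cycle_alt by blast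
      from ne obtain e where "(e \<in> cedges vs' \<and> e \<notin> cedges vs) \<or> (e \<in> cedges vs \<and> e \<notin> cedges vs')"
        unfolding vs'(2) by blast
      then show False
        using two_cycles_contra[OF g conn vs'(1) vs] two_cycles_contra[OF g conn vs vs'(1)] ce by auto
    qed
    ultimately show "unicyclic V w" unfolding unicyclic_def using conn by blast
  qed
qed

abbreviation sdet :: "'a set \<Rightarrow> ('a \<Rightarrow> 'a \<Rightarrow> real) \<Rightarrow> real" where
  "sdet V w \<equiv> adj_det (subdiv_verts V w) (subdiv_wt V w)"

lemma core_base:
  assumes g: "wgraph V w" and conn: "connected_wg V w" and ce: "card (edges V w) = card V"
    and c: "cyc_ok V w vs" and deg: "\<forall>v\<in>V. 2 \<le> card {e \<in> edges V w. v \<in> e}"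
  shows "sdet V w = sdet (\<Union>(cedges vs)) (cycle_wt w (cedges vs))"
proof -
  let ?E = "edges V w" and ?C = "cedges vs"
  have finV: "finite V" using g unfolding wgraph_def by blast
  have finE: "finite ?E" using edges_fin[OF finV] .
  have hs: "(\<Sum>v\<in>V. card {e \<in> ?E. v \<in> e}) = (\<Sum>v\<in>V. 2)" using handshake[OF g] ce by simp
  have deg2: "card {e \<in> ?E. v \<in> e} = 2" if v: "v \<in> V" for v
  proof (rule ccontr)
    assume "card {e \<in> ?E. v \<in> e} \<noteq> 2"
    then have "2 < card {e \<in> ?E. v \<in> e}" using deg v by force
    then have "(\<Sum>v\<in>V. 2) < (\<Sum>v\<in>V. card {e \<in> ?E. v \<in> e})"
      using sum_strict_mono_ex1[OF finV, of "\<lambda>_. 2" "\<lambda>v. card {e \<in> ?E. v \<in> e}"] deg v by blast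
    then show False using hs by simp
  qed
  have sV: "set vs \<subseteq> V" using c unfolding cyc_ok_def by blast
  have loc: "{e \<in> ?E. x \<in> e} \<subseteq> ?C" if x: "x \<in> set vs" for x
  proof -
    obtain c1 c2 where cc: "c1 \<in> ?C" "c2 \<in> ?C" "c1 \<noteq> c2" "x \<in> c1" "x \<in> c2"
      using cyc_two[OF c x] by blast
    have sub: "{c1, c2} \<subseteq> {e \<in> ?E. x \<in> e}" using cc cedges_sub[OF c] by blast
    have fin: "finite {e \<in> ?E. x \<in> e}" using finE by simp
    have "card {c1, c2} = card {e \<in> ?E. x \<in> e}" using deg2[of x] x sV cc(3) by auto
    then have eq: "{c1, c2} = {e \<in> ?E. x \<in> e}" using card_subset_eq[OF fin sub] by simp
    have "{c1, c2} \<subseteq> ?C" using cc(1,2) by simp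
    then show ?thesis unfolding eq .
  qed
  have UC: "\<Union>?C = set vs" by (rule cedges_Union[OF c])
  have VU: "V = set vs"
  proof
    show "set vs \<subseteq> V" using sV .
  next
    have len3: "3 \<le> length vs" using c unfolding cyc_ok_def by blast
    then have len: "0 < length vs" by linarith
    then have x0: "vs ! 0 \<in> set vs" by simp
    then have x0V: "vs ! 0 \<in> V" using sV by blast
    show "V \<subseteq> set vs"
    proof
      fix y assume y: "y \<in> V"
      have "(vs ! 0, y) \<in> (rel V w)\<^sup>*" using conn x0V y unfolding conn_alt by blast
      then show "y \<in> set vs"
      proof (induction rule: rtrancl_induct)
        case base then show ?case using x0 .
      next
        case (step a b)
        have ab: "a \<in> V \<and> b \<in> V \<and> w a b \<noteq> 0" using rel_in[OF step.hyps(2)] .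
        then have "{a, b} \<in> {e \<in> ?E. a \<in> e}" using edge_mem[of a V b w] by blast
        then have "{a, b} \<in> ?C" using loc[OF step.IH] by blast
        then have "b \<in> \<Union>?C" by blast
        then show ?case using UC by simp
      qed
    qed
  qed
  have EC: "?E = ?C"
  proof
    show "?C \<subseteq> ?E" by (rule cedges_sub[OF c])
  next
    show "?E \<subseteq> ?C"
    proof
      fix e assume e: "e \<in> ?E"
      obtain a b where ab: "e = {a, b}" "a \<in> V" using e unfolding edges_def by blast
      have "e \<in> {e \<in> ?E. a \<in> e}" using e ab by blast
      then show "e \<in> ?C" using loc[of a] ab VU by blast
    qed
  qed
  have UV: "\<Union>?C = V" using UC VU by simp
  have EC2: "edges V (cycle_wt w ?C) = ?C"
  proof
    show "edges V (cycle_wt w ?C) \<subseteq> ?C"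
    proof
      fix e assume "e \<in> edges V (cycle_wt w ?C)"
      then obtain a b where "e = {a, b}" "cycle_wt w ?C a b \<noteq> 0" unfolding edges_def by blast
      then show "e \<in> ?C" unfolding cycle_wt_def by (simp split: if_splits)
    qed
  next
    show "?C \<subseteq> edges V (cycle_wt w ?C)"
    proof
      fix e assume e: "e \<in> ?C"
      then have "e \<in> ?E" using EC by simp
      then obtain a b where ab: "e = {a, b}" "a \<in> V" "b \<in> V" "w a b \<noteq> 0" unfolding edges_def by blast
      then have "cycle_wt w ?C a b \<noteq> 0" unfolding cycle_wt_def using e by simp
      then show "e \<in> edges V (cycle_wt w ?C)" using ab edge_mem[of a V b "cycle_wt w ?C"] by blast
    qed
  qed
  have SV: "subdiv_verts (\<Union>?C) (cycle_wt w ?C) = subdiv_verts V w"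
    unfolding UV subdiv_verts_def EC2 EC ..
  have sumeq: "(\<Sum>v\<in>e - {a}. cycle_wt w ?C a v) = (\<Sum>v\<in>e - {a}. w a v)"
    if e: "e \<in> ?C" "a \<in> e" for e a
  proof (rule sum.cong[OF refl])
    fix v assume v: "v \<in> e - {a}"
    have "e \<in> ?E" using e EC by simp
    then obtain z where z: "e = {a, z}" using edge_at[OF g _ e(2)] by blast
    then have "{a, v} = e" using v by blast
    then show "cycle_wt w ?C a v = w a v" unfolding cycle_wt_def using e by simp
  qed
  have WV: "subdiv_wt (\<Union>?C) (cycle_wt w ?C) x y = subdiv_wt V w x y" for x y
  proof (cases x; cases y)
    fix a e assume xy: "x = Inl a" "y = Inr e"
    show ?thesis unfolding xy UV using sumeq[of e a] EC2 EC by simp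
  next
    fix a e assume xy: "x = Inr e" "y = Inl a"
    show ?thesis unfolding xy UV using sumeq[of e a] EC2 EC by simp
  qed simp_all
  show ?thesis unfolding SV WV ..
qed

lemma core:
  assumes "wgraph V w" "connected_wg V w" "card (edges V w) = card V" "cyc_ok V w vs"
  shows "sdet V w \<noteq> 0 \<longleftrightarrow> sdet (\<Union>(cedges vs)) (cycle_wt w (cedges vs)) \<noteq> 0"
  using assms
proof (induction "card V" arbitrary: V rule: less_induct)
  case less
  have g: "wgraph V w" and conn: "connected_wg V w" and ce: "card (edges V w) = card V"
    and c: "cyc_ok V w vs" using less.prems by blast+
  have finV: "finite V" using g unfolding wgraph_def by blast
  have finE: "finite (edges V w)" using edges_fin[OF finV] .
  show ?case
  proof (cases "\<exists>u\<in>V. card {e \<in> edges V w. u \<in> e} \<le> 1")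
    case False
    then have "\<forall>v\<in>V. 2 \<le> card {e \<in> edges V w. v \<in> e}" by auto
    then show ?thesis using core_base[OF g conn ce c] by simp
  next
    case True
    then obtain u where u: "u \<in> V" "card {e \<in> edges V w. u \<in> e} \<le> 1" by blast
    have uvs: "u \<notin> set vs" using deg_cycle[OF g c] u(2) by fastforce
    have len3: "3 \<le> length vs" using c unfolding cyc_ok_def by blast
    then have len: "0 < length vs" by linarith
    have y: "vs ! 0 \<in> set vs" using len by simp
    then have yV: "vs ! 0 \<in> V" using c unfolding cyc_ok_def by blast
    have yu: "vs ! 0 \<noteq> u" using y uvs by blast
    have "(u, vs ! 0) \<in> (rel V w)\<^sup>*" using conn u(1) yV unfolding conn_alt by blast
    then obtain z where z: "(u, z) \<in> rel V w" using yu by (metis converse_rtranclE)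
    have zz: "u \<in> V \<and> z \<in> V \<and> w u z \<noteq> 0" using rel_in[OF z] .
    have "{u, z} \<in> {e \<in> edges V w. u \<in> e}" using zz edge_mem[of u V z w] by blast
    then have "card {e \<in> edges V w. u \<in> e} \<noteq> 0" using finE by auto
    then have "card {e \<in> edges V w. u \<in> e} = 1" using u(2) by simp
    then obtain e0 where e0: "{e \<in> edges V w. u \<in> e} = {e0}" by (rule card_1_singletonE)
    then have e0E: "e0 \<in> edges V w" "u \<in> e0" by blast+
    obtain v where v: "v \<in> V" "e0 = {u, v}" "w u v \<noteq> 0" "v \<noteq> u"
      using edge_at[OF g e0E] by blast
    have leaf: "{e \<in> edges V w. u \<in> e} = {{u, v}}" using e0 v(2) by simp
    let ?V = "V - {u}"
    have g': "wgraph ?V w" using wgraph_sub[OF g] by blast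
    have conn': "connected_wg ?V w" by (rule conn_leaf[OF g conn u(1) v(1) v(3) leaf])
    have le: "edges ?V w = edges V w - {{u, v}}" by (rule leaf_edges[OF g u(1) leaf])
    have uvE: "{u, v} \<in> edges V w" using e0E v(2) by simp
    have ce': "card (edges ?V w) = card ?V"
      unfolding le using ce finV u(1) uvE by (simp add: card_Diff_singleton)
    have c': "cyc_ok ?V w vs" using c uvs unfolding cyc_ok_def by blast
    have lt: "card ?V < card V" using u(1) finV by (meson card_Diff1_less)
    have IH: "sdet ?V w \<noteq> 0 \<longleftrightarrow> sdet (\<Union>(cedges vs)) (cycle_wt w (cedges vs)) \<noteq> 0"
      by (rule less.hyps[OF lt g' conn' ce' c'])
    have d: "sdet V w = - (w u v * w u v) * sdet ?V w" by (rule det_leaf[OF g u(1) v(1) v(3) leaf])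
    have "w u v * w u v \<noteq> 0" using v(3) by simp
    then have "sdet V w \<noteq> 0 \<longleftrightarrow> sdet ?V w \<noteq> 0" using d by simp
    then show ?thesis using IH by simp
  qed
qed

theorem theorem34:
  fixes V :: "'a set" and w :: "'a \<Rightarrow> 'a \<Rightarrow> real"
  assumes "wgraph V w" and "connected_wg V w"
  shows "subdiv_nonsingular V w \<longleftrightarrow>
    (unicyclic V w \<and> (\<exists>C. is_cycle V w C \<and> subdiv_nonsingular (\<Union>C) (cycle_wt w C)))"
proof
  assume ns: "subdiv_nonsingular V w"
  have ce: "card (edges V w) = card V"
    using ns det_zero_card[OF assms(1)] unfolding subdiv_nonsingular_def nonsingular_def by blast
  have uni: "unicyclic V w" using uni_iff[OF assms] ce by simp
  have finV: "finite V" using assms(1) unfolding wgraph_def by blast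
  have "V \<noteq> {}" using assms(2) unfolding conn_alt by blast
  then have "edges V w \<noteq> {}" using ce finV by auto
  then obtain vs where vs: "cyc_ok V w vs" using cycle_exists[OF assms(1)] ce by auto
  have "is_cycle V w (cedges vs)" unfolding is_cycle_alt using vs by blast
  moreover have "subdiv_nonsingular (\<Union>(cedges vs)) (cycle_wt w (cedges vs))"
    using ns core[OF assms ce vs] unfolding subdiv_nonsingular_def nonsingular_def by blast
  ultimately show "unicyclic V w \<and> (\<exists>C. is_cycle V w C \<and> subdiv_nonsingular (\<Union>C) (cycle_wt w C))"
    using uni by blast
next
  assume h: "unicyclic V w \<and> (\<exists>C. is_cycle V w C \<and> subdiv_nonsingular (\<Union>C) (cycle_wt w C))"
  then have ce: "card (edges V w) = card V" using uni_iff[OF assms] by simp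
  obtain C where C: "is_cycle V w C" "subdiv_nonsingular (\<Union>C) (cycle_wt w C)" using h by blast
  obtain vs where vs: "cyc_ok V w vs" "C = cedges vs" using C(1) unfolding is_cycle_alt by blast
  show "subdiv_nonsingular V w"
    using C(2) core[OF assms ce vs(1)] vs(2) unfolding subdiv_nonsingular_def nonsingular_def by blast
qed

end
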